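(* In the FIND setting of the context, fix a leaf cluster $\mathcal C_r$ of $\mathcal T$ and a consistent ordering of $\mathcal T_r^+$. If $\mathcal C_i$ is a leaf node of $\mathcal T_r^+$, then $\boldsymbol\Sigma_i(\mathcal C_i,\mathcal C_i)=\boldsymbol\Sigma(\mathcal C_i,\mathcal C_i)$.
   Context: Setting (FIND). $\mathcal M$ is a finite set of mesh nodes; $\mathbf A$ is an invertible complex matrix indexed by $\mathcal M\times\mathcal M$, structurally symmetric ($A_{ij}\neq0\iff A_{ji}\neq0$); distinct nodes $i,j$ are connected if $A_{ij}\neq 0$. $\boldsymbol\Sigma$ is a complex matrix indexed by $\mathcal M\times\mathcal M$ with $\Sigma_{ij}=0$ whenever $i\neq j$ and $i,j$ are not connected. $\dagger$ is conjugate transpose, $\mathbf X^{-\dagger}=(\mathbf X^{-1})^\dagger$. $\mathbf X(X,Y)$ is the submatrix with rows in $X$, columns in $Y$. For a cluster $\mathcal C\subseteq\mathcal M$: boundary set $\mathcal B_{\mathcal C}=\{i\in\mathcal C: A_{ij}\neq 0\text{ for some } j\notin\mathcal C\}$, inner set $\mathcal I_{\mathcal C}=\mathcal C\setminus\mathcal B_{\mathcal C}$; for $\mathcal C_g$ write $\mathcal B_g,\mathcal I_g$. Cluster tree: $\mathcal T$ is a rooted binary tree of clusters with root $\mathcal M$, each non-leaf cluster the disjoint union of its two children. For a leaf $\mathcal C_r$ with path $r=a_0,\dots,a_d$ (root) and $b_k$ the sibling of $a_k$, the augmented tree $\mathcal T_r^+$ has root $\mathcal C_{-r}=\mathcal M\setminus\mathcal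 C_r$; for $0\le k\le d-2$, $\mathcal C_{-a_k}=\mathcal M\setminus\mathcal C_{a_k}$ has children $\mathcal C_{b_k}$ and $\mathcal C_{-a_{k+1}}$, with $\mathcal C_{-a_{d-1}}$ identified with $\mathcal C_{b_{d-1}}$; each basic cluster $\mathcal C_{b_k}$ carries its subtree from $\mathcal T$. Private inner nodes: $\mathcal S_g=\mathcal I_g$ for a leaf $g$ of $\mathcal T_r^+$; $\mathcal S_g=\mathcal I_g\setminus(\mathcal I_i\cup\mathcal I_j)$ if $g$ has children $i,j$. Consistent ordering: a total order $g_1,\dots,g_m$ of the nodes of $\mathcal T_r^+$ with every node after all its descendants. Elimination: $\mathbf A_{g_1}=\mathbf A$, $\boldsymbol\Sigma_{g_1}=\boldsymbol\Sigma$; for each $g$ (with $\mathbf A_g(\mathcal S_g,\mathcal S_g)$ invertible), $\mathcal L_g=\mathbf A_g(\mathcal B_g,\mathcal S_g)\mathbf A_g(\mathcal S_g,\mathcal S_g)^{-1}$, $\mathbf L_g$ is the identity on $\mathcal M$ except $\mathbf L_g(\mathcal B_g,\mathcal S_g)=\mathcal L_g$, $\mathbf A_{g+}=\mathbf L_g^{-1}\mathbf A_g$, $\boldsymbol\Sigma_{g+}=\mathbf L_g^{-1}\boldsymbol\Sigma_g\mathbf L_g^{-\dagger}$, and $\mathbf A_{g_{t+1}}=\mathbf A_{g_t+}$, $\boldsymbol\Sigma_{g_{t+1}}=\boldsymbol\Sigma_{g_t+}$. Thus $\boldsymbol\Sigma_i$ is the matrix just before eliminating $\mathcal S_i$. 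*)

theory Defs
  imports Complex_Main
begin

type_synonym 'a cmat = "'a \<Rightarrow> 'a \<Rightarrow> complex"

definition idm :: "'a cmat" where
  "idm = (\<lambda>i j. if i = j then 1 else 0)"

definition mmul :: "'a set \<Rightarrow> 'a cmat \<Rightarrow> 'a cmat \<Rightarrow> 'a cmat" where
  "mmul S X Y = (\<lambda>i j. \<Sum>k\<in>S. X i k * Y k j)"

definition is_inv_on :: "'a set \<Rightarrow> 'a cmat \<Rightarrow> 'a cmat \<Rightarrow> bool" where
  "is_inv_on S X Y \<longleftrightarrow>
     (\<forall>i\<in>S. \<forall>j\<in>S. mmul S X Y i j = idm i j \<and> mmul S Y X i j = idm i j)"

definition invertible_on :: "'a set \<Rightarrow> 'a cmat \<Rightarrow> bool" where
  "invertible_on S X \<longleftrightarrow> (\<exists>Y. is_inv_on S X Y)"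

text \<open>Inverse of the submatrix X(S,S) (entries outside S x S set to 0).\<close>
definition mat_inv :: "'a set \<Rightarrow> 'a cmat \<Rightarrow> 'a cmat" where
  "mat_inv S X = (SOME Y. is_inv_on S X Y \<and> (\<forall>i j. i \<notin> S \<or> j \<notin> S \<longrightarrow> Y i j = 0))"

definition adj :: "'a cmat \<Rightarrow> 'a cmat" where
  "adj X = (\<lambda>i j. cnj (X j i))"

datatype 'a ctree = Lf "'a set" | Nd "'a ctree" "'a ctree"

fun cluster :: "'a ctree \<Rightarrow> 'a set" where
  "cluster (Lf C) = C"
| "cluster (Nd l r) = cluster l \<union> cluster r"

fun wf_ctree :: "'a ctree \<Rightarrow> bool" where
  "wf_ctree (Lf C) = True"
| "wf_ctree (Nd l r) = (wf_ctree l \<and> wf_ctree r \<and> cluster l \<inter> cluster r = {})"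

text \<open>Nodes are addressed by positions (paths from the root; False = left, True = right).\<close>
fun subtree :: "'a ctree \<Rightarrow> bool list \<Rightarrow> 'a ctree option" where
  "subtree t [] = Some t"
| "subtree (Nd l r) (False # p) = subtree l p"
| "subtree (Nd l r) (True # p) = subtree r p"
| "subtree (Lf C) (_ # p) = None"

definition nodes :: "'a ctree \<Rightarrow> bool list set" where
  "nodes t = {p. subtree t p \<noteq> None}"

definition is_leaf_node :: "'a ctree \<Rightarrow> bool list \<Rightarrow> bool" where
  "is_leaf_node t p \<longleftrightarrow> (\<exists>C. subtree t p = Some (Lf C))"

definition clus :: "'a ctree \<Rightarrow> bool list \<Rightarrow> 'a set" where
  "clus t p = cluster (the (subtree t p))"

definition proper_desc :: "bool list \<Rightarrow> bool list \<Rightarrow> bool" where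
  "proper_desc q p \<longleftrightarrow> (\<exists>x. x \<noteq> [] \<and> q = p @ x)"

text \<open>augc X t p: X is the tree for C_{-a_k} (complement of the current cluster t = C_{a_k}),
  p the remaining path from a_k down to the leaf r.  Going down one step from a_k to
  a_{k-1}, the new complement C_{-a_{k-1}} has children C_{b_{k-1}} and C_{-a_k}.\<close>
fun augc :: "'a ctree \<Rightarrow> 'a ctree \<Rightarrow> bool list \<Rightarrow> 'a ctree" where
  "augc X t [] = X"
| "augc X (Nd l r) (False # p) = augc (Nd r X) l p"
| "augc X (Nd l r) (True # p) = augc (Nd l X) r p"
| "augc X (Lf C) (_ # p) = X"

text \<open>The augmented tree for the leaf at position rp (rp nonempty): at the root a_d,
  the complement of a_{d-1} is C_{b_{d-1}} (with its subtree).\<close>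
fun aug_tree :: "'a ctree \<Rightarrow> bool list \<Rightarrow> 'a ctree" where
  "aug_tree (Nd l r) (False # p) = augc r l p"
| "aug_tree (Nd l r) (True # p) = augc l r p"
| "aug_tree t _ = t"

definition bnd :: "'a set \<Rightarrow> 'a cmat \<Rightarrow> 'a set \<Rightarrow> 'a set" where
  "bnd M A C = {i \<in> C. \<exists>j \<in> M - C. A i j \<noteq> 0}"

definition inn :: "'a set \<Rightarrow> 'a cmat \<Rightarrow> 'a set \<Rightarrow> 'a set" where
  "inn M A C = C - bnd M A C"

definition priv :: "'a set \<Rightarrow> 'a cmat \<Rightarrow> 'a ctree \<Rightarrow> bool list \<Rightarrow> 'a set" where
  "priv M A t p = (case the (subtree t p) of
       Lf C \<Rightarrow> inn M A C
     | Nd l r \<Rightarrow> inn M A (cluster (Nd l r)) - (inn M A (cluster l) \<union> inn M A (cluster r)))"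

definition consistent_ordering :: "'a ctree \<Rightarrow> bool list list \<Rightarrow> bool" where
  "consistent_ordering t ord \<longleftrightarrow> distinct ord \<and> set ord = nodes t \<and>
     (\<forall>i < length ord. \<forall>j < length ord. proper_desc (ord ! j) (ord ! i) \<longrightarrow> j < i)"

text \<open>One elimination step at node g, with boundary set B = B_g, private set S = S_g:
  maps (A_g, Sigma_g) to (A_{g+}, Sigma_{g+}).\<close>
definition elim_step :: "'a set \<Rightarrow> 'a set \<Rightarrow> 'a set \<Rightarrow> 'a cmat \<times> 'a cmat \<Rightarrow> 'a cmat \<times> 'a cmat" where
  "elim_step M B S st = (let Ag = fst st; Sg = snd st;
       Lc = mmul S Ag (mat_inv S Ag);
       L = (\<lambda>i j. if i \<in> B \<and> j \<in> S then Lc i j else idm i j);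
       Li = mat_inv M L
     in (mmul M Li Ag, mmul M (mmul M Li Sg) (adj Li)))"

text \<open>elim_seq M A Sigma t ord k = (A_{g_{k+1}}, Sigma_{g_{k+1}}), i.e. the matrices just before
  eliminating node ord ! k.  Boundary sets are those of the clusters w.r.t. the original A.\<close>
fun elim_seq :: "'a set \<Rightarrow> 'a cmat \<Rightarrow> 'a cmat \<Rightarrow> 'a ctree \<Rightarrow> bool list list \<Rightarrow> nat \<Rightarrow> 'a cmat \<times> 'a cmat" where
  "elim_seq M A Sig t ord 0 = (A, Sig)"
| "elim_seq M A Sig t ord (Suc k) =
     elim_step M (bnd M A (clus t (ord ! k))) (priv M A t (ord ! k)) (elim_seq M A Sig t ord k)"

end

theory Submission
  imports Defs
begin

lemma delta_l: "finite M \<Longrightarrow> i \<in> M \<Longrightarrow> (\<Sum>k\<in>M. idm i k * f k) = f i"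
proof -
  have "(\<Sum>k\<in>M. idm i k * f k) = (\<Sum>k\<in>M. if i = k then f k else 0)"
    by (rule sum.cong) (auto simp: idm_def)
  then show "finite M \<Longrightarrow> i \<in> M \<Longrightarrow> ?thesis" by simp
qed

lemma delta_r: "finite M \<Longrightarrow> j \<in> M \<Longrightarrow> (\<Sum>k\<in>M. f k * idm k j) = f j"
proof -
  have "(\<Sum>k\<in>M. f k * idm k j) = (\<Sum>k\<in>M. if k = j then f k else 0)"
    by (rule sum.cong) (auto simp: idm_def)
  then show "finite M \<Longrightarrow> j \<in> M \<Longrightarrow> ?thesis" by simp
qed

lemma L_inv_exists:
  assumes BS: "B \<inter> S = {}" and fin: "finite M"
  shows "\<exists>Y. is_inv_on M (\<lambda>i j. if i \<in> B \<and> j \<in> S then c i j else idm i j) Y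
            \<and> (\<forall>i j. i \<notin> M \<or> j \<notin> M \<longrightarrow> Y i j = 0)"
proof -
  define N where "N = (\<lambda>i j. if i \<in> B \<and> j \<in> S then c i j else (0::complex))"
  have L: "(\<lambda>i j. if i \<in> B \<and> j \<in> S then c i j else idm i j) = (\<lambda>i j. idm i j + N i j)"
    using BS by (auto simp: N_def idm_def fun_eq_iff)
  have NN: "\<And>i k j. N i k * N k j = 0" using BS by (auto simp: N_def)
  define Y where "Y = (\<lambda>i j. if i \<in> M \<and> j \<in> M then idm i j - N i j else 0)"
  have 1: "mmul M (\<lambda>i j. idm i j + N i j) Y i j = idm i j" if "i \<in> M" "j \<in> M" for i j
  proof -
    have "mmul M (\<lambda>i j. idm i j + N i j) Y i j
       = (\<Sum>k\<in>M. idm i k * (idm k j - N k j)) + (\<Sum>k\<in>M. (N i k * idm k j - N i k * N k j))"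
      unfolding mmul_def Y_def using that
      by (simp add: sum.distrib[symmetric] algebra_simps)
    also have "\<dots> = idm i j - N i j + N i j"
      using that fin by (simp add: NN delta_l delta_r)
    finally show ?thesis by simp
  qed
  have 2: "mmul M Y (\<lambda>i j. idm i j + N i j) i j = idm i j" if "i \<in> M" "j \<in> M" for i j
  proof -
    have "mmul M Y (\<lambda>i j. idm i j + N i j) i j
       = (\<Sum>k\<in>M. idm i k * (idm k j + N k j)) - (\<Sum>k\<in>M. (N i k * idm k j + N i k * N k j))"
      unfolding mmul_def Y_def using that
      by (simp add: sum_subtractf[symmetric] algebra_simps)
    also have "\<dots> = idm i j + N i j - N i j"
      using that fin by (simp add: NN delta_l delta_r)
    finally show ?thesis by simp
  qed
  show ?thesis
    by (rule exI[of _ Y]) (use 1 2 in \<open>auto simp: L is_inv_on_def Y_def\<close>)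
qed

lemma elim_step_keep:
  assumes BS: "B \<inter> S = {}" and fin: "finite M" and x: "x \<in> M" "x \<notin> B" and y: "y \<in> M" "y \<notin> B"
  shows "snd (elim_step M B S st) x y = snd st x y"
proof -
  define L where "L = (\<lambda>i j. if i \<in> B \<and> j \<in> S then mmul S (fst st) (mat_inv S (fst st)) i j else idm i j)"
  define Li where "Li = mat_inv M L"
  have "\<exists>Y. is_inv_on M L Y \<and> (\<forall>i j. i \<notin> M \<or> j \<notin> M \<longrightarrow> Y i j = 0)"
    unfolding L_def by (rule L_inv_exists[OF BS fin])
  hence "is_inv_on M L Li" unfolding Li_def mat_inv_def by (rule someI2_ex) blast
  hence inv: "\<And>i j. i \<in> M \<Longrightarrow> j \<in> M \<Longrightarrow> mmul M L Li i j = idm i j" by (simp add: is_inv_on_def)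
  have row: "Li z j = idm z j" if "z \<in> M" "z \<notin> B" "j \<in> M" for z j
  proof -
    have "mmul M L Li z j = (\<Sum>k\<in>M. idm z k * Li k j)"
      unfolding mmul_def L_def using that by simp
    also have "\<dots> = Li z j" using fin that by (simp add: delta_l)
    finally show ?thesis using inv that by simp
  qed
  have cid: "\<And>a b. cnj (idm a b) = idm a b" by (simp add: idm_def)
  have "snd (elim_step M B S st) x y = mmul M (mmul M Li (snd st)) (adj Li) x y"
    unfolding elim_step_def Let_def Li_def L_def snd_conv ..
  also have "\<dots> = (\<Sum>l\<in>M. (\<Sum>k\<in>M. idm x k * snd st k l) * idm l y)"
    unfolding mmul_def adj_def
  proof (intro sum.cong refl)
    fix l assume l: "l \<in> M"
    have "(\<Sum>k\<in>M. Li x k * snd st k l) = (\<Sum>k\<in>M. idm x k * snd st k l)"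
      by (rule sum.cong) (use row x in auto)
    moreover have "cnj (Li y l) = idm l y" using row[OF y l] cid[of y l]
      by (simp add: idm_def)
    ultimately show "(\<Sum>k\<in>M. Li x k * snd st k l) * cnj (Li y l) = (\<Sum>k\<in>M. idm x k * snd st k l) * idm l y"
      by simp
  qed
  also have "\<dots> = snd st x y" using fin x y by (simp add: delta_l delta_r)
  finally show ?thesis .
qed

lemma augc_wf:
  "wf_ctree X \<Longrightarrow> wf_ctree t \<Longrightarrow> cluster X \<inter> cluster t = {} \<Longrightarrow>
   wf_ctree (augc X t p) \<and> cluster (augc X t p) \<subseteq> cluster X \<union> cluster t"
  by (induction X t p rule: augc.induct) auto

lemma aug_wf:
  "wf_ctree T \<Longrightarrow> wf_ctree (aug_tree T p) \<and> cluster (aug_tree T p) \<subseteq> cluster T"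
  by (induction T p rule: aug_tree.induct) (use augc_wf in \<open>fastforce+\<close>)

lemma subtree_sub:
  "subtree t p = Some a \<Longrightarrow> cluster a \<subseteq> cluster t"
  by (induction t p rule: subtree.induct) auto

lemma subtree_app:
  "subtree t (p @ x) = (case subtree t p of None \<Rightarrow> None | Some s \<Rightarrow> subtree s x)"
  by (induction t p rule: subtree.induct) auto

lemma subtree_disj:
  "wf_ctree t \<Longrightarrow> subtree t p = Some a \<Longrightarrow> subtree t q = Some b \<Longrightarrow>
   \<not> (\<exists>x. q = p @ x) \<Longrightarrow> \<not> (\<exists>x. p = q @ x) \<Longrightarrow> cluster a \<inter> cluster b = {}"
proof (induction t p arbitrary: q rule: subtree.induct)
  case (1 t) then show ?case by auto
next
  case (2 l r p)
  then show ?case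
  proof (cases q)
    case (Cons c q')
    with 2 show ?thesis
      using subtree_sub by (cases c) (auto, blast+)
  qed auto
next
  case (3 l r p)
  then show ?case
  proof (cases q)
    case (Cons c q')
    with 3 show ?thesis
      using subtree_sub by (cases c) (auto, blast+)
  qed auto
next
  case (4 C uu p) then show ?case by auto
qed

theorem corollary3:
  fixes M :: "'a set" and A Sig :: "'a cmat" and T :: "'a ctree"
    and rp :: "bool list" and Cr :: "'a set" and ord :: "bool list list"
    and k :: nat and Ci :: "'a set"
  assumes finM: "finite M"
    and invA: "invertible_on M A"
    and symA: "\<forall>i\<in>M. \<forall>j\<in>M. A i j \<noteq> 0 \<longleftrightarrow> A j i \<noteq> 0"
    and sparse: "\<forall>i\<in>M. \<forall>j\<in>M. i \<noteq> j \<and> A i j = 0 \<longrightarrow> Sig i j = 0"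
    and wfT: "wf_ctree T" and rootT: "cluster T = M"
    and leaf_r: "subtree T rp = Some (Lf Cr)" and rp_ne: "rp \<noteq> []"
    and cons: "consistent_ordering (aug_tree T rp) ord"
    and inv_steps: "\<forall>j < length ord.
        invertible_on (priv M A (aug_tree T rp) (ord ! j)) (fst (elim_seq M A Sig (aug_tree T rp) ord j))"
    and k: "k < length ord"
    and leaf_i: "subtree (aug_tree T rp) (ord ! k) = Some (Lf Ci)"
  shows "\<forall>x\<in>Ci. \<forall>y\<in>Ci. snd (elim_seq M A Sig (aug_tree T rp) ord k) x y = Sig x y"
proof -
  define t where "t = aug_tree T rp"
  have wft: "wf_ctree t" and tM: "cluster t \<subseteq> M" using aug_wf[OF wfT, of rp] rootT t_def by auto
  have CiM: "Ci \<subseteq> M" using subtree_sub[OF leaf_i[folded t_def]] tM by auto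
  have disj: "bnd M A (clus t (ord ! j)) \<inter> Ci = {}" if j: "j < k" for j
  proof -
    have jl: "j < length ord" using j k by simp
    have nodes: "ord ! j \<in> nodes t" using cons jl unfolding consistent_ordering_def t_def
      by (metis nth_mem)
    then obtain a where a: "subtree t (ord ! j) = Some a" by (auto simp: nodes_def)
    have neq: "ord ! j \<noteq> ord ! k" using cons jl k j
      unfolding consistent_ordering_def t_def by (simp add: nth_eq_iff_index_eq)
    have n1: "\<not> (\<exists>x. ord ! k = ord ! j @ x)"
    proof
      assume "\<exists>x. ord ! k = ord ! j @ x"
      then obtain x where x: "ord ! k = ord ! j @ x" by blast
      with neq have "x \<noteq> []" by auto
      with x have "proper_desc (ord ! k) (ord ! j)" by (auto simp: proper_desc_def)
      with cons jl k j show False unfolding consistent_ordering_def t_def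
        by (meson not_less_iff_gr_or_eq)
    qed
    have n2: "\<not> (\<exists>x. ord ! j = ord ! k @ x)"
    proof
      assume "\<exists>x. ord ! j = ord ! k @ x"
      then obtain x where x: "ord ! j = ord ! k @ x" by blast
      with neq have "x \<noteq> []" by auto
      then obtain c x' where "x = c # x'" by (cases x) auto
      with x a leaf_i show False by (simp add: subtree_app t_def)
    qed
    have "cluster a \<inter> Ci = {}"
      using subtree_disj[OF wft a leaf_i[folded t_def] n1 n2] by simp
    moreover have "bnd M A (clus t (ord ! j)) \<subseteq> cluster a"
      using a by (auto simp: bnd_def clus_def)
    ultimately show ?thesis by blast
  qed
  have BS: "bnd M A (clus t p) \<inter> priv M A t p = {}" for p
    unfolding priv_def clus_def inn_def
    by (cases "the (subtree t p)") auto
  have "\<forall>x\<in>Ci. \<forall>y\<in>Ci. snd (elim_seq M A Sig t ord m) x y = Sig x y" if "m \<le> k" for m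
    using that
  proof (induction m)
    case 0 then show ?case by simp
  next
    case (Suc m)
    show ?case
    proof (intro ballI)
      fix x y assume xy: "x \<in> Ci" "y \<in> Ci"
      have "snd (elim_seq M A Sig t ord (Suc m)) x y = snd (elim_seq M A Sig t ord m) x y"
        using disj[of m] Suc.prems xy CiM BS[of "ord ! m"] finM
        by (simp only: elim_seq.simps) (rule elim_step_keep, auto)
      also have "\<dots> = Sig x y" using Suc xy by simp
      finally show "snd (elim_seq M A Sig t ord (Suc m)) x y = Sig x y" .
    qed
  qed
  then show ?thesis unfolding t_def by simp
qed

end
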